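(* Let $Z\subseteq\Sigma^{\mathbb Z}$ be a sofic shift and $(C_1,\dots,C_K)$ a non-redundant graph-induced covering of $Z$. If $\mathcal H_1=(S,E)$ with $S=\{s_1,\dots,s_K\}$ and $\mathcal H_2=(Q,F)$ with $Q=\{q_1,\dots,q_K\}$ are two presentations of it, with $C_j=\mathcal Z(\mathcal H_1,s_j)=\mathcal Z(\mathcal H_2,q_j)$ for all $j$, then for all $j,l$ and $i\in\Sigma$: $(s_j,s_l,i)\in E$ if and only if $(q_j,q_l,i)\in F$. In particular the presentation is unique up to isomorphism.
   Context: $\Sigma$ is a nonempty countable alphabet; $\Sigma^{\mathbb Z}$ the bi-infinite sequences over $\Sigma$, $\sigma(\bar z)_k=z_{k+1}$. A labeled graph is $\mathcal G=(S,E)$ with $S$ finite, $E\subseteq S\times S\times\Sigma$; standing assumption: every node has at least one incoming and one outgoing edge. A bi-infinite walk labeled by $\bar z$ is $(e_k)_{k\in\mathbb Z}$ with $e_k=(s_k,s_{k+1},z_k)\in E$; it starts at $s$ if $s_0=s$. $\mathcal Z(\mathcal G)$ (resp. $\mathcal Z(\mathcal G,s)$) is the set of labels of all bi-infinite walks (resp. those starting at $s$). A sofic shift is a set of the form $\mathcal Z(\mathcal G)$. A graph-induced covering of $Z$ is a family $(C_1,\dots,C_K)$ of subsets of $Z$ such that some graph $\mathcal G$ with nodes $s_1,\dots,s_K$ satisfies $\mathcal Z(\mathcal G)=Z$ and $C_j=\mathcal Z(\mathcal G,s_j)$ (a presentation); it is non-redundant if $C_i\cap C_j=\emptyset$ for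 $i\ne j$. Graphs $(S,E)$, $(Q,F)$ are isomorphic if there is a bijection $\varphi:S\to Q$ with $(s,q,i)\in E\iff(\varphi(s),\varphi(q),i)\in F$. *)

theory Defs
  imports Main "HOL-Library.Countable"
begin

text \<open>A labeled graph is a pair (S, E) of a node set S and an edge set
  E \<subseteq> S \<times> S \<times> \<Sigma>, an edge (s, q, i) going from s to q with label i.\<close>

type_synonym ('s, 'a) lgraph = "'s set \<times> ('s \<times> 's \<times> 'a) set"

definition shift :: "(int \<Rightarrow> 'a) \<Rightarrow> (int \<Rightarrow> 'a)" where
  "shift z = (\<lambda>k. z (k + 1))"

definition is_lgraph :: "('s, 'a) lgraph \<Rightarrow> bool" where
  "is_lgraph G \<longleftrightarrow> finite (fst G) \<and>
     (\<forall>(s, q, i) \<in> snd G. s \<in> fst G \<and> q \<in> fst G) \<and>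
     (\<forall>s \<in> fst G. (\<exists>q i. (q, s, i) \<in> snd G) \<and> (\<exists>q i. (s, q, i) \<in> snd G))"

definition is_walk :: "('s, 'a) lgraph \<Rightarrow> (int \<Rightarrow> 's) \<Rightarrow> (int \<Rightarrow> 'a) \<Rightarrow> bool" where
  "is_walk G st z \<longleftrightarrow> (\<forall>k. (st k, st (k + 1), z k) \<in> snd G)"

definition Zg :: "('s, 'a) lgraph \<Rightarrow> (int \<Rightarrow> 'a) set" where
  "Zg G = {z. \<exists>st. is_walk G st z}"

definition Zgs :: "('s, 'a) lgraph \<Rightarrow> 's \<Rightarrow> (int \<Rightarrow> 'a) set" where
  "Zgs G s = {z. \<exists>st. is_walk G st z \<and> st 0 = s}"

definition sofic :: "(int \<Rightarrow> 'a) set \<Rightarrow> bool" where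
  "sofic Z \<longleftrightarrow> (\<exists>G :: (nat, 'a) lgraph. is_lgraph G \<and> Zg G = Z)"

definition presentation ::
  "(int \<Rightarrow> 'a) set \<Rightarrow> nat \<Rightarrow> (nat \<Rightarrow> (int \<Rightarrow> 'a) set) \<Rightarrow> ('s, 'a) lgraph \<Rightarrow> (nat \<Rightarrow> 's) \<Rightarrow> bool" where
  "presentation Z K C H s \<longleftrightarrow> is_lgraph H \<and> inj_on s {1..K} \<and> fst H = s ` {1..K} \<and>
     Zg H = Z \<and> (\<forall>j \<in> {1..K}. C j = Zgs H (s j))"

definition graph_induced_covering :: "(int \<Rightarrow> 'a) set \<Rightarrow> nat \<Rightarrow> (nat \<Rightarrow> (int \<Rightarrow> 'a) set) \<Rightarrow> bool" where
  "graph_induced_covering Z K C \<longleftrightarrow>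
     (\<exists>(H :: (nat, 'a) lgraph) s. presentation Z K C H s)"

definition non_redundant :: "nat \<Rightarrow> (nat \<Rightarrow> (int \<Rightarrow> 'a) set) \<Rightarrow> bool" where
  "non_redundant K C \<longleftrightarrow> (\<forall>i \<in> {1..K}. \<forall>j \<in> {1..K}. i \<noteq> j \<longrightarrow> C i \<inter> C j = {})"

definition lgraph_iso :: "('s, 'a) lgraph \<Rightarrow> ('t, 'a) lgraph \<Rightarrow> bool" where
  "lgraph_iso G H \<longleftrightarrow> (\<exists>\<phi>. bij_betw \<phi> (fst G) (fst H) \<and>
     (\<forall>s \<in> fst G. \<forall>q \<in> fst G. \<forall>i. (s, q, i) \<in> snd G \<longleftrightarrow> (\<phi> s, \<phi> q, i) \<in> snd H))"

end

theory Submission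
  imports Defs
begin

lemma walk_through_edge:
  assumes G: "is_lgraph G" and e: "(a, b, i) \<in> snd G"
  shows "\<exists>st z. is_walk G st z \<and> st 0 = a \<and> st 1 = b \<and> z 0 = i"
proof -
  define nxt where "nxt = (\<lambda>x. SOME p. (x, fst p, snd p) \<in> snd G)"
  define prv where "prv = (\<lambda>x. SOME p. (fst p, x, snd p) \<in> snd G)"
  have inS: "x \<in> fst G \<and> y \<in> fst G" if "(x, y, c) \<in> snd G" for x y c
    using G that unfolding is_lgraph_def by fast
  have nx: "(x, fst (nxt x), snd (nxt x)) \<in> snd G" if "x \<in> fst G" for x
  proof -
    from G that obtain y c where "(x, y, c) \<in> snd G" unfolding is_lgraph_def by blast
    then have "(x, fst (y,c), snd (y,c)) \<in> snd G" by simp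
    then show ?thesis unfolding nxt_def by (rule someI)
  qed
  have pv: "(fst (prv x), x, snd (prv x)) \<in> snd G" if "x \<in> fst G" for x
  proof -
    from G that obtain y c where "(y, x, c) \<in> snd G" unfolding is_lgraph_def by blast
    then have "(fst (y,c), x, snd (y,c)) \<in> snd G" by simp
    then show ?thesis unfolding prv_def by (rule someI)
  qed
  define fwd where "fwd = (\<lambda>n. ((\<lambda>x. fst (nxt x)) ^^ n) b)"
  define bwd where "bwd = (\<lambda>n. ((\<lambda>x. fst (prv x)) ^^ n) a)"
  have fwdS: "fwd n \<in> fst G" for n
    by (induction n) (use inS[OF e] in \<open>simp_all add: fwd_def\<close>, metis nx inS)
  have bwdS: "bwd n \<in> fst G" for n
    by (induction n) (use inS[OF e] in \<open>simp_all add: bwd_def\<close>, metis pv inS)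
  define st where "st = (\<lambda>k::int. if k \<ge> 1 then fwd (nat (k - 1)) else bwd (nat (- k)))"
  define z where "z = (\<lambda>k::int. if k \<ge> 1 then snd (nxt (fwd (nat (k - 1))))
                     else if k = 0 then i else snd (prv (bwd (nat (- k - 1)))))"
  have "is_walk G st z"
    unfolding is_walk_def
  proof
    fix k :: int
    consider "k \<ge> 1" | "k = 0" | "k \<le> -1" by linarith
    then show "(st k, st (k + 1), z k) \<in> snd G"
    proof cases
      case 1
      then have "nat k = Suc (nat (k - 1))" by simp
      then show ?thesis using 1 nx[OF fwdS[of "nat (k-1)"]]
        by (simp add: st_def z_def fwd_def)
    next
      case 2 then show ?thesis using e by (simp add: st_def z_def fwd_def bwd_def)
    next
      case 3
      then have "nat (- k) = Suc (nat (- k - 1))" by simp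
      moreover have "nat (- (k+1)) = nat (- k - 1)" by simp
      ultimately show ?thesis using 3 pv[OF bwdS[of "nat (-k-1)"]]
        by (simp add: st_def z_def bwd_def)
    qed
  qed
  moreover have "st 0 = a" "st 1 = b" "z 0 = i" by (simp_all add: st_def z_def fwd_def bwd_def)
  ultimately show ?thesis by blast
qed

lemma walk_shift:
  assumes "is_walk G st z"
  shows "is_walk G (\<lambda>k. st (k + 1)) (shift z)"
  using assms unfolding is_walk_def shift_def by (metis add.commute add.left_commute)

lemma one_dir:
  assumes P1: "presentation Z K C H1 s" and P2: "presentation Z K C H2 q"
    and nr: "non_redundant K C" and j: "j \<in> {1..K}" and l: "l \<in> {1..K}"
    and e: "(s j, s l, i) \<in> snd H1"
  shows "(q j, q l, i) \<in> snd H2"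
proof -
  have G1: "is_lgraph H1" using P1 unfolding presentation_def by blast
  obtain st z where w: "is_walk H1 st z" and w0: "st 0 = s j" "st 1 = s l" "z 0 = i"
    using walk_through_edge[OF G1 e] by blast
  have "z \<in> Zgs H1 (s j)" using w w0 unfolding Zgs_def by blast
  then have "z \<in> C j" using P1 j unfolding presentation_def by blast
  then have "z \<in> Zgs H2 (q j)" using P2 j unfolding presentation_def by blast
  then obtain st2 where w2: "is_walk H2 st2 z" "st2 0 = q j" unfolding Zgs_def by blast
  have G2: "is_lgraph H2" and F2: "fst H2 = q ` {1..K}" using P2 unfolding presentation_def by blast+
  have e2: "(q j, st2 1, i) \<in> snd H2" using w2 w0 unfolding is_walk_def
    by (metis add_0)
  then have "st2 1 \<in> fst H2" using G2 unfolding is_lgraph_def by fast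
  then obtain m where m: "m \<in> {1..K}" "st2 1 = q m" using F2 by blast
  have "shift z \<in> Zgs H1 (s l)" using walk_shift[OF w] w0 unfolding Zgs_def by force
  then have sl: "shift z \<in> C l" using P1 l unfolding presentation_def by blast
  have "shift z \<in> Zgs H2 (q m)" using walk_shift[OF w2(1)] m unfolding Zgs_def by force
  then have sm: "shift z \<in> C m" using P2 m unfolding presentation_def by blast
  have "m = l" using nr sl sm m l unfolding non_redundant_def by blast
  then show ?thesis using e2 m by simp
qed

theorem mainTheorem4:
  fixes Z :: "(int \<Rightarrow> 'a::countable) set"
    and K :: nat
    and C :: "nat \<Rightarrow> (int \<Rightarrow> 'a) set"
    and H1 :: "('s, 'a) lgraph" and s :: "nat \<Rightarrow> 's"
    and H2 :: "('q, 'a) lgraph" and q :: "nat \<Rightarrow> 'q"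
  assumes "sofic Z"
    and "graph_induced_covering Z K C"
    and "non_redundant K C"
    and "presentation Z K C H1 s"
    and "presentation Z K C H2 q"
  shows "(\<forall>j \<in> {1..K}. \<forall>l \<in> {1..K}. \<forall>i.
            (s j, s l, i) \<in> snd H1 \<longleftrightarrow> (q j, q l, i) \<in> snd H2)
         \<and> lgraph_iso H1 H2"
proof -
  have A: "\<forall>j \<in> {1..K}. \<forall>l \<in> {1..K}. \<forall>i.
            (s j, s l, i) \<in> snd H1 \<longleftrightarrow> (q j, q l, i) \<in> snd H2"
    using one_dir[OF assms(4) assms(5) assms(3)] one_dir[OF assms(5) assms(4) assms(3)] by blast
  have hs: "inj_on s {1..K}" "fst H1 = s ` {1..K}" using assms(4) unfolding presentation_def by blast+
  have iq: "inj_on q {1..K}" "fst H2 = q ` {1..K}" using assms(5) unfolding presentation_def by blast+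
  define \<phi> where "\<phi> = q \<circ> inv_into {1..K} s"
  have phis: "\<phi> (s j) = q j" if "j \<in> {1..K}" for j
    using hs(1) that by (simp add: \<phi>_def)
  have "bij_betw \<phi> (fst H1) (fst H2)"
  proof -
    have "bij_betw (inv_into {1..K} s) (s ` {1..K}) {1..K}"
      using hs(1) by (rule bij_betw_inv_into[OF inj_on_imp_bij_betw])
    moreover have "bij_betw q {1..K} (q ` {1..K})" using iq(1) by (rule inj_on_imp_bij_betw)
    ultimately show ?thesis unfolding \<phi>_def hs(2) iq(2) by (rule bij_betw_trans)
  qed
  moreover have "\<forall>x \<in> fst H1. \<forall>y \<in> fst H1. \<forall>i. (x, y, i) \<in> snd H1 \<longleftrightarrow> (\<phi> x, \<phi> y, i) \<in> snd H2"
    using A phis hs(2) by auto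
  ultimately show ?thesis using A unfolding lgraph_iso_def by blast
qed

end
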